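(* Let $A\in(0,1)$ and let $\Omega_0$ be the bounded domain enclosed by the closed curve $\Gamma_0$ (see context). Then $\frac{2}{A}\operatorname{Re}\phi$ is the Green function of $\Omega_0$ with pole at $0$; that is, $\operatorname{Re}\phi$ is harmonic on $\Omega_0\setminus\{0\}$, has boundary values $0$ on $\Gamma_0$, and $\operatorname{Re}\phi(z)-\frac{A}{2}\log|z|$ stays bounded as $z\to0$ (up to the sign/normalization fixed by $\frac{2}{A}\operatorname{Re}\phi(z)= -\log|z|+O(1)$ corresponding to the positive Green function, with the sign convention that $\operatorname{Re}\phi>0$ in $\Omega_0$). Consequently, for every $r>0$, the level set $\{z\in\Omega_0:\operatorname{Re}\phi(z)=r/2\}$ is a simple closed curve encircling $0$.
   Context: Fix $A\in(0,1)$, $\beta_{1,2}=2-A\mp2\sqrt{1-A}$, $R(z)=(z-\beta_1)^{1/2}(z-\beta_2)^{1/2}$ on $\mathbb C\setminus[\beta_1,\beta_2]$ with $R(z)\sim z$ at $\infty$, and $\phi(z)=\frac12\int_{\beta_1}^z\frac{R(s)}{s}ds$ on $\mathbb C\setminus((-\infty,0]\cup[\beta_1,\infty))$ (path avoiding these cuts except at its start). $\operatorname{Re}\phi$ is well defined and harmonic on $\mathbb C\setminus(\{0\}\cup[\beta_1,\infty))$. $\Gamma_0$ denotes the simple closed curve through $\beta_1$ encircling $0$ consisting of the trajectory $\{\operatorname{Re}\phi=0\}$ that leaves $\beta_1$ at angle $-2\pi/3$ together with its mirror image in the real axis; it meets the real axis only at $\beta_1$ and at one negative point. *)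

theory Defs
  imports "HOL-Complex_Analysis.Complex_Analysis"
begin

definition beta1 :: "real \<Rightarrow> real" where
  "beta1 A = 2 - A - 2 * sqrt (1 - A)"
definition beta2 :: "real \<Rightarrow> real" where
  "beta2 A = 2 - A + 2 * sqrt (1 - A)"

text \<open>R(z) = (z-beta1)^(1/2) (z-beta2)^(1/2), principal square roots: analytic off
  [beta1,beta2] and R(z) ~ z at infinity.\<close>
definition Rfun :: "real \<Rightarrow> complex \<Rightarrow> complex" where
  "Rfun A z = csqrt (z - of_real (beta1 A)) * csqrt (z - of_real (beta2 A))"

definition cutset :: "real \<Rightarrow> complex set" where
  "cutset A = {z. Im z = 0 \<and> (Re z \<le> 0 \<or> Re z \<ge> beta1 A)}"

text \<open>phi(z) = 1/2 int_{beta1}^z R(s)/s ds on C minus the cuts; the straight segment from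
  beta1 to such z avoids the cuts except at its start.\<close>
definition phi :: "real \<Rightarrow> complex \<Rightarrow> complex" where
  "phi A z = contour_integral (linepath (of_real (beta1 A)) z) (\<lambda>s. Rfun A s / s) / 2"

text \<open>Re phi, extended continuously across the negative real axis (where it is well defined
  and harmonic, as stated in the context).\<close>
definition RePhi :: "real \<Rightarrow> complex \<Rightarrow> real" where
  "RePhi A z = (if z \<notin> cutset A then Re (phi A z)
               else Lim (at z within (- cutset A)) (\<lambda>w. Re (phi A w)))"

definition harmonic_on :: "complex set \<Rightarrow> (complex \<Rightarrow> real) \<Rightarrow> bool" where
  "harmonic_on S u \<longleftrightarrow> open S \<and>
     (\<exists>ux uy uxx uxy uyx uyy.
        continuous_on S uxx \<and> continuous_on S uxy \<and> continuous_on S uyx \<and> continuous_on S uyy \<and>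
        (\<forall>z\<in>S. (u has_derivative (\<lambda>h. Re h * ux z + Im h * uy z)) (at z) \<and>
                (ux has_derivative (\<lambda>h. Re h * uxx z + Im h * uxy z)) (at z) \<and>
                (uy has_derivative (\<lambda>h. Re h * uyx z + Im h * uyy z)) (at z) \<and>
                uxx z + uyy z = 0))"

definition is_Gamma0 :: "real \<Rightarrow> (real \<Rightarrow> complex) \<Rightarrow> bool" where
  "is_Gamma0 A g \<longleftrightarrow>
     simple_path g \<and> pathfinish g = pathstart g \<and> pathstart g = of_real (beta1 A) \<and>
     (\<forall>z\<in>path_image g - {of_real (beta1 A)}.
         z \<noteq> 0 \<and> \<not> (Im z = 0 \<and> Re z \<ge> beta1 A) \<and> RePhi A z = 0) \<and>
     ((\<lambda>t. (g t - of_real (beta1 A)) / of_real (cmod (g t - of_real (beta1 A))))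
        \<longlongrightarrow> cis (- 2 * pi / 3)) (at_right 0) \<and>
     cnj ` path_image g = path_image g"

end

theory Submission
  imports Defs
begin

definition UU :: "real \<Rightarrow> complex set" where
  "UU A = - {z. Im z = 0 \<and> beta1 A \<le> Re z}"

definition R2 :: "real \<Rightarrow> complex \<Rightarrow> complex" where
  "R2 A z = - (csqrt (of_real (beta1 A) - z) * csqrt (of_real (beta2 A) - z))"

definition N1 :: "real \<Rightarrow> complex \<Rightarrow> complex" where
  "N1 A z = z - of_real (2 - A) + R2 A z"

definition N2 :: "real \<Rightarrow> complex \<Rightarrow> complex" where
  "N2 A z = of_real (A^2) - of_real (2 - A) * z - of_real A * R2 A z"

definition EE :: "real \<Rightarrow> complex \<Rightarrow> real" where
  "EE A z = Re (R2 A z) / 2 - (2 - A) / 2 * ln (cmod (N1 A z)) + A / 2 * ln (cmod (N2 A z))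
      - A / 2 * ln (cmod z)"

context
  fixes A :: real
  assumes A0: "0 < A" and A1: "A < 1"
begin

lemma sq1: "0 < sqrt (1 - A)" "sqrt (1 - A) < 1" "(sqrt (1 - A))^2 = 1 - A"
  using A0 A1 by (auto simp: real_sqrt_lt_1_iff)

lemma beta_facts: "0 < beta1 A" "beta1 A < beta2 A" "beta1 A * beta2 A = A^2"
   "beta1 A + beta2 A = 2 * (2 - A)"
proof -
  have s: "(sqrt (1 - A))^2 = 1 - A" "0 < sqrt (1 - A)" "sqrt (1 - A) < 1" using sq1 by auto
  have "(2 - A - 2 * sqrt (1 - A)) * (2 - A + 2 * sqrt (1 - A)) = A^2"
    using s by (simp add: algebra_simps power2_eq_square)
  moreover have "2 - A + 2 * sqrt (1 - A) > 0" using s(2) A1 by linarith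
  ultimately have "2 - A - 2 * sqrt (1 - A) > 0" using A0
    by (metis zero_less_mult_pos2 zero_less_power)
  then show "0 < beta1 A" "beta1 A < beta2 A" "beta1 A * beta2 A = A^2"
   "beta1 A + beta2 A = 2 * (2 - A)" using s \<open>_ * _ = A^2\<close> by (auto simp: beta1_def beta2_def)
qed

lemma Rfun_eq: assumes "z \<in> UU A" shows "Rfun A z = R2 A z"
proof -
  have b: "0 < beta1 A" "beta1 A < beta2 A" using beta_facts by auto
  have z: "Im z \<noteq> 0 \<or> Re z < beta1 A" using assms by (auto simp: UU_def)
  have key: "csqrt (z - of_real b) = (if Im z < 0 then - \<i> else \<i>) * csqrt (of_real b - z)"
    if "Im z \<noteq> 0 \<or> Re z < b" for b
  proof (cases "Im z < 0")
    case True
    have "csqrt (of_real b - z) = csqrt (- (z - of_real b))" by simp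
    also have "\<dots> = \<i> * csqrt (z - of_real b)" using True by (intro csqrt_minus) auto
    finally show ?thesis using True by (simp add: algebra_simps)
  next
    case False
    have "csqrt (z - of_real b) = csqrt (- (of_real b - z))" by simp
    also have "\<dots> = \<i> * csqrt (of_real b - z)" using False that by (intro csqrt_minus) auto
    finally show ?thesis using False by simp
  qed
  have "Im z \<noteq> 0 \<or> Re z < beta2 A" using z b by auto
  then show ?thesis unfolding Rfun_def R2_def key[OF z] key[OF \<open>Im z \<noteq> 0 \<or> Re z < beta2 A\<close>]
    by (simp add: algebra_simps)
qed

end


context
  fixes A :: real
  assumes A0: "0 < A" and A1: "A < 1"
begin

lemma open_UU: "open (UU A)"
proof -
  have "closed {z::complex. Im z = 0 \<and> beta1 A \<le> Re z}"
    by (intro closed_Collect_conj closed_Collect_eq closed_Collect_le continuous_intros)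
  then show ?thesis unfolding UU_def by (simp add: open_Compl)
qed

lemma zero_UU: "0 \<in> UU A"
  using beta_facts[OF A0 A1] by (auto simp: UU_def)

lemma UU_iff: "z \<in> UU A \<longleftrightarrow> Im z \<noteq> 0 \<or> Re z < beta1 A"
  by (auto simp: UU_def)

lemma starlike_UU: "starlike (UU A)"
  unfolding starlike_def
proof (intro bexI[of _ 0] ballI subsetI)
  show "0 \<in> UU A" by (rule zero_UU)
  fix z x assume z: "z \<in> UU A" and x: "x \<in> closed_segment 0 z"
  then obtain u where u: "0 \<le> u" "u \<le> 1" "x = u *\<^sub>R z" by (auto simp: closed_segment_def)
  have b: "0 < beta1 A" using beta_facts[OF A0 A1] by auto
  show "x \<in> UU A"
  proof (cases "Im z = 0")
    case True
    then have "Re z < beta1 A" using z by (auto simp: UU_iff)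
    have "u * Re z < beta1 A"
    proof (cases "Re z \<le> 0")
      case True
      then have "u * Re z \<le> 0" using u by (simp add: mult_nonneg_nonpos)
      then show ?thesis using b by linarith
    next
      case False
      then have "u * Re z \<le> Re z" using u by (simp add: mult_left_le_one_le)
      then show ?thesis using \<open>Re z < beta1 A\<close> by linarith
    qed
    then show ?thesis using u by (simp add: UU_iff)
  next
    case False
    show ?thesis
    proof (cases "u = 0")
      case True then show ?thesis using u b by (simp add: UU_iff)
    next
      case False
      then show ?thesis using u \<open>Im z \<noteq> 0\<close> by (simp add: UU_iff)
    qed
  qed
qed

lemma connected_UU: "connected (UU A)"
  by (rule starlike_imp_connected[OF starlike_UU])

lemma simply_connected_UU: "simply_connected (UU A)"
  by (rule starlike_imp_simply_connected[OF starlike_UU])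

lemma UU_nonpos: assumes "z \<in> UU A" "b \<ge> beta1 A"
  shows "of_real b - z \<notin> \<real>\<^sub>\<le>\<^sub>0"
  using assms by (auto simp: UU_iff complex_nonpos_Reals_iff)

lemma R2_sq: "(R2 A z)^2 = z^2 - 2 * of_real (2 - A) * z + of_real (A^2)"
proof -
  have "(R2 A z)^2 = (of_real (beta1 A) - z) * (of_real (beta2 A) - z)"
    by (simp add: R2_def power_mult_distrib)
  also have "\<dots> = z^2 - of_real (beta1 A + beta2 A) * z + of_real (beta1 A * beta2 A)"
    by (simp add: algebra_simps power2_eq_square)
  finally show ?thesis using beta_facts[OF A0 A1] by simp
qed

lemma R2_nz: assumes "z \<in> UU A" shows "R2 A z \<noteq> 0"
proof -
  have "of_real (beta1 A) - z \<noteq> 0" "of_real (beta2 A) - z \<noteq> 0"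
    using UU_nonpos[OF assms, of "beta1 A"] UU_nonpos[OF assms, of "beta2 A"] beta_facts[OF A0 A1]
    by auto
  then show ?thesis by (simp add: R2_def)
qed

lemma R2_zero: "R2 A 0 = - of_real A"
proof -
  have b: "0 < beta1 A" "beta1 A < beta2 A" "beta1 A * beta2 A = A^2" using beta_facts[OF A0 A1] by auto
  have "sqrt (beta1 A) * sqrt (beta2 A) = A"
    using b A0 by (simp add: real_sqrt_mult[symmetric])
  then show ?thesis using b
    by (simp add: R2_def csqrt_of_real flip: of_real_mult)
qed

lemma R2_deriv: assumes "z \<in> UU A"
  shows "(R2 A has_field_derivative (z - of_real (2 - A)) / R2 A z) (at z)"
proof -
  define c1 where "c1 = csqrt (of_real (beta1 A) - z)"
  define c2 where "c2 = csqrt (of_real (beta2 A) - z)"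
  have n1: "of_real (beta1 A) - z \<notin> \<real>\<^sub>\<le>\<^sub>0" "of_real (beta2 A) - z \<notin> \<real>\<^sub>\<le>\<^sub>0"
    using UU_nonpos[OF assms, of "beta1 A"] UU_nonpos[OF assms, of "beta2 A"] beta_facts[OF A0 A1]
    by auto
  have c1: "c1 \<noteq> 0" "c1^2 = of_real (beta1 A) - z" using n1 by (auto simp: c1_def)
  have c2: "c2 \<noteq> 0" "c2^2 = of_real (beta2 A) - z" using n1 by (auto simp: c2_def)
  have d1: "((\<lambda>w. csqrt (of_real (beta1 A) - w)) has_field_derivative (- inverse (2 * c1))) (at z)"
    unfolding c1_def
    by (rule derivative_eq_intros refl n1 | simp add: inverse_eq_divide)+
  have d2: "((\<lambda>w. csqrt (of_real (beta2 A) - w)) has_field_derivative (- inverse (2 * c2))) (at z)"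
    unfolding c2_def
    by (rule derivative_eq_intros refl n1 | simp add: inverse_eq_divide)+
  have "(R2 A has_field_derivative - ((- inverse (2 * c1)) * c2 + c1 * (- inverse (2 * c2)))) (at z)"
    unfolding R2_def[abs_def] c1_def[symmetric] c2_def[symmetric]
    using DERIV_mult[OF d1 d2] by (auto intro: derivative_eq_intros simp: c1_def c2_def)
  moreover have "- ((- inverse (2 * c1)) * c2 + c1 * (- inverse (2 * c2))) = (c1^2 + c2^2) / (2 * c1 * c2)"
    using c1 c2 by (simp add: field_simps power2_eq_square)
  moreover have "\<dots> = (z - of_real (2 - A)) / R2 A z"
  proof -
    have "c1^2 + c2^2 = of_real (beta1 A + beta2 A) - 2 * z" using c1 c2 by simp
    also have "\<dots> = 2 * of_real (2 - A) - 2 * z" using beta_facts[OF A0 A1] by simp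
    finally have s: "c1^2 + c2^2 = 2 * of_real (2 - A) - 2 * z" .
    show ?thesis unfolding R2_def c1_def[symmetric] c2_def[symmetric] s
      using c1 c2 by (simp add: field_simps)
  qed
  ultimately show ?thesis by simp
qed

lemma R2_holo: "R2 A holomorphic_on UU A"
  using R2_deriv open_UU holomorphic_on_open by blast

lemma N1_nz: assumes "z \<in> UU A" shows "N1 A z \<noteq> 0"
proof
  assume "N1 A z = 0"
  then have "R2 A z = of_real (2 - A) - z" by (simp add: N1_def algebra_simps)
  then have "(of_real (2 - A) - z)^2 = z^2 - 2 * of_real (2 - A) * z + of_real (A^2)"
    using R2_sq by metis
  then have "of_real ((2 - A)^2) = (of_real (A^2) :: complex)"
    by (simp add: algebra_simps power2_eq_square)
  then have "(2 - A)^2 = A^2" using of_real_eq_iff by blast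
  then show False using A0 A1 by (simp add: power2_eq_square algebra_simps)
qed

lemma N2_nz: assumes "z \<in> UU A" shows "N2 A z \<noteq> 0"
proof
  assume h: "N2 A z = 0"
  show False
  proof (cases "z = 0")
    case True
    then have "N2 A z = 2 * of_real (A^2)" by (simp add: N2_def R2_zero power2_eq_square)
    then show False using h A0 by simp
  next
    case False
    from h have "of_real A * R2 A z = of_real (A^2) - of_real (2 - A) * z" by (simp add: N2_def algebra_simps)
    then have "(of_real A)^2 * (R2 A z)^2 = (of_real (A^2) - of_real (2 - A) * z)^2"
      by (metis power_mult_distrib)
    then have "(of_real A)^2 * (z^2 - 2 * of_real (2 - A) * z + of_real (A^2)) = (of_real (A^2) - of_real (2 - A) * z)^2"
      by (simp add: R2_sq)
    then have "of_real (A^2 - (2-A)^2) * z^2 = 0"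
      by (simp add: algebra_simps power2_eq_square)
    then have "complex_of_real (A^2 - (2-A)^2) = 0" using False by (simp only: mult_eq_0_iff power_eq_0_iff) simp
    then have "A^2 - (2-A)^2 = 0" by (simp only: of_real_eq_0_iff)
    then show False using A0 A1 by (simp add: power2_eq_square algebra_simps)
  qed
qed

end


lemma Re_deriv: "(f has_field_derivative f') (at z) \<Longrightarrow>
   ((\<lambda>w. Re (f w)) has_derivative (\<lambda>h. Re (h * f'))) (at z)"
proof -
  assume a: "(f has_field_derivative f') (at z)"
  have eq: "(\<lambda>h. Re (f' * h)) = (\<lambda>h. Re (h * f'))" by (simp add: mult.commute)
  show ?thesis using has_derivative_Re[OF has_field_derivative_imp_has_derivative[OF a]] unfolding eq .
qed

lemma lncmod_deriv:
  assumes "open S" "z \<in> S" "\<And>w. w \<in> S \<Longrightarrow> N w \<noteq> 0" "(N has_field_derivative N') (at z)"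
  shows "((\<lambda>w. ln (cmod (N w))) has_derivative (\<lambda>h. Re (h * (N' / N z)))) (at z)"
proof -
  have nz: "N z \<noteq> 0" using assms by auto
  have d: "((\<lambda>w. N w / N z) has_field_derivative N' / N z) (at z)"
    using nz assms(4) by (intro derivative_eq_intros assms(4) refl) (auto simp: field_simps)
  have l: "(Ln has_field_derivative 1) (at ((\<lambda>w. N w / N z) z))"
    using has_field_derivative_Ln[of 1] nz by simp
  have "((\<lambda>w. Ln (N w / N z)) has_field_derivative (1 * (N' / N z))) (at z)"
    using DERIV_chain2[where f=Ln and g="\<lambda>w. N w / N z" and x=z, OF l d] by simp
  then have "((\<lambda>w. Ln (N w / N z)) has_field_derivative (N' / N z)) (at z)" by simp
  from has_derivative_add[OF Re_deriv[OF this] has_derivative_const]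
  have "((\<lambda>w. Re (Ln (N w / N z)) + ln (cmod (N z))) has_derivative (\<lambda>h. Re (h * (N' / N z)))) (at z)"
    by simp
  then show ?thesis
  proof (rule has_derivative_transform_within_open[OF _ assms(1,2)])
    fix w assume "w \<in> S"
    then have "N w \<noteq> 0" using assms(3) by auto
    then show "Re (Ln (N w / N z)) + ln (cmod (N z)) = ln (cmod (N w))"
      using nz by (simp add: norm_divide ln_div)
  qed
qed

lemma lin_comb: "Re (h * P) / 2 - c1 * Re (h * Q) + c2 * Re (h * S) - c3 * Re (h * T)
   = Re (h * (P / 2 - of_real c1 * Q + of_real c2 * S - of_real c3 * T))"
  by (simp add: algebra_simps)

context
  fixes A :: real
  assumes A0: "0 < A" and A1: "A < 1"
begin

lemma EE_deriv: assumes "z \<in> UU A" "z \<noteq> 0"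
  shows "(EE A has_derivative (\<lambda>h. Re (h * (R2 A z / (2 * z))))) (at z)"
proof -
  define R' where "R' = (z - of_real (2 - A)) / R2 A z"
  have S: "open (UU A - {0})" "z \<in> UU A - {0}" using assms open_UU[OF A0 A1] by (auto simp: open_delete)
  have dR: "(R2 A has_field_derivative R') (at z)" unfolding R'_def using R2_deriv[OF A0 A1 assms(1)] .
  have d1: "(N1 A has_field_derivative 1 + R') (at z)"
    unfolding N1_def[abs_def] by (rule derivative_eq_intros dR refl | simp)+
  have d2: "(N2 A has_field_derivative - of_real (2 - A) - of_real A * R') (at z)"
    unfolding N2_def[abs_def] by (rule derivative_eq_intros dR refl | simp)+
  have e1: "((\<lambda>w. ln (cmod (N1 A w))) has_derivative (\<lambda>h. Re (h * ((1 + R') / N1 A z)))) (at z)"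
    by (rule lncmod_deriv[OF S _ d1]) (use N1_nz[OF A0 A1] in auto)
  have e2: "((\<lambda>w. ln (cmod (N2 A w))) has_derivative (\<lambda>h. Re (h * ((- of_real (2 - A) - of_real A * R') / N2 A z)))) (at z)"
    by (rule lncmod_deriv[OF S _ d2]) (use N2_nz[OF A0 A1] in auto)
  have e3: "((\<lambda>w. ln (cmod w)) has_derivative (\<lambda>h. Re (h * (1 / z)))) (at z)"
    using lncmod_deriv[OF S, where N="\<lambda>w. w" and N'=1] by (auto intro: derivative_eq_intros)
  have e0: "((\<lambda>w. Re (R2 A w)) has_derivative (\<lambda>h. Re (h * R'))) (at z)"
    by (rule Re_deriv[OF dR])
  have e0': "((\<lambda>w. Re (R2 A w) / 2) has_derivative (\<lambda>h. Re (h * R') / 2)) (at z)"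
    by (rule bounded_linear.has_derivative[OF bounded_linear_divide e0])
  define X where "X = R' / 2 - of_real ((2 - A) / 2) * ((1 + R') / N1 A z)
     + of_real (A / 2) * ((- of_real (2 - A) - of_real A * R') / N2 A z) - of_real (A / 2) * (1 / z)"
  have "(EE A has_derivative (\<lambda>h. Re (h * R') / 2 - (2 - A) / 2 * Re (h * ((1 + R') / N1 A z))
       + A / 2 * Re (h * ((- of_real (2 - A) - of_real A * R') / N2 A z)) - A / 2 * Re (h * (1 / z)))) (at z)"
    unfolding EE_def[abs_def] by (intro derivative_intros e0' e1 e2 e3)
  moreover have "(\<lambda>h. Re (h * R') / 2 - (2 - A) / 2 * Re (h * ((1 + R') / N1 A z))
       + A / 2 * Re (h * ((- of_real (2 - A) - of_real A * R') / N2 A z)) - A / 2 * Re (h * (1 / z)))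
      = (\<lambda>h. Re (h * X))"
    unfolding X_def by (rule ext, rule lin_comb)
  moreover have "X = R2 A z / (2 * z)"
  proof -
    define R where "R = R2 A z"
    define b where "b = complex_of_real (2 - A)"
    define a where "a = complex_of_real A"
    have Rnz: "R \<noteq> 0" unfolding R_def using R2_nz[OF A0 A1 assms(1)] .
    have n1: "N1 A z \<noteq> 0" "N2 A z \<noteq> 0" using N1_nz[OF A0 A1 assms(1)] N2_nz[OF A0 A1 assms(1)] by auto
    have sq: "R^2 = z^2 - 2 * b * z + a^2" unfolding R_def a_def b_def by (simp add: R2_sq[OF A0 A1])
    have N1e: "N1 A z = z - b + R" unfolding N1_def R_def b_def by simp
    have N2e: "N2 A z = a^2 - b * z - a * R" unfolding N2_def R_def b_def a_def by simp
    have R'e: "R' = (z - b) / R" unfolding R'_def R_def b_def by simp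
    have "1 + R' = N1 A z / R" unfolding R'e N1e using Rnz by (simp add: field_simps)
    then have i1: "(1 + R') / N1 A z = 1 / R" using n1 by simp
    have i2: "(- b - a * R') / N2 A z - 1 / z = a / (z * R)"
    proof -
      have p: "z * (- b * R - a * (z - b)) - R * N2 A z = a * N2 A z"
        unfolding N2e using sq by algebra
      have e: "- b - a * R' = (- b * R - a * (z - b)) / R" using Rnz unfolding R'e by (simp add: field_simps)
      have "(- b - a * R') / N2 A z - 1 / z = (z * (- b * R - a * (z - b)) - R * N2 A z) / (R * z * N2 A z)"
        unfolding e using Rnz n1 assms(2) by (simp add: field_simps)
      also have "\<dots> = a / (z * R)" unfolding p using Rnz n1 assms(2) by (simp add: field_simps)
      finally show ?thesis .
    qed
    have "X = R' / 2 - b / 2 * ((1 + R') / N1 A z) + a / 2 * ((- b - a * R') / N2 A z - 1 / z)"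
      unfolding X_def a_def b_def by (simp add: right_diff_distrib)
    also have "\<dots> = ((z - b) * z - b * z + a^2) / (2 * z * R)"
      using Rnz assms(2) by (simp only: i1 i2) (simp add: R'e field_simps power2_eq_square)
    also have "(z - b) * z - b * z + a^2 = R^2" using sq by (simp add: algebra_simps power2_eq_square)
    also have "R^2 / (2 * z * R) = R / (2 * z)"
      using Rnz assms(2) by (simp add: field_simps power2_eq_square)
    finally show ?thesis unfolding R_def .
  qed
  ultimately show ?thesis by simp
qed

end


context
  fixes A :: real
  assumes A0: "0 < A" and A1: "A < 1"
begin

abbreviation "b1 \<equiv> complex_of_real (beta1 A)"

lemma Re_complex_of_real_mult_eq: "Re (complex_of_real x * w) = x * Re w" by simp

lemma R2_b1: "R2 A b1 = 0" by (simp add: R2_def)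

lemma isCont_R2_b1: "isCont (R2 A) b1"
proof -
  have c: "isCont (\<lambda>w. sqrt (cmod (b1 - w)) * sqrt (cmod (of_real (beta2 A) - w))) b1"
    by (intro continuous_intros)
  have "((\<lambda>w. sqrt (cmod (b1 - w)) * sqrt (cmod (of_real (beta2 A) - w))) \<longlongrightarrow> 0) (at b1)"
    using c unfolding isCont_def by simp
  then have "((\<lambda>w. norm (R2 A w)) \<longlongrightarrow> 0) (at b1)"
    by (simp add: R2_def norm_mult)
  then have "(R2 A \<longlongrightarrow> 0) (at b1)" by (rule tendsto_norm_zero_cancel)
  then show ?thesis unfolding isCont_def R2_b1 .
qed

lemma N1_b1: "N1 A b1 \<noteq> 0"
proof -
  have "N1 A b1 = b1 - of_real (2 - A)" by (simp add: N1_def R2_b1)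
  also have "\<dots> = of_real (- 2 * sqrt (1 - A))" by (simp add: beta1_def)
  finally have "N1 A b1 = of_real (- 2 * sqrt (1 - A))" .
  then show ?thesis using sq1[OF A0 A1] by simp
qed

lemma N2_b1: "N2 A b1 \<noteq> 0"
proof -
  have s: "(sqrt (1 - A))^2 = 1 - A" "0 < sqrt (1 - A)" using sq1[OF A0 A1] by auto
  have "N2 A b1 = of_real (A^2 - (2 - A) * beta1 A)" by (simp add: N2_def R2_b1)
  also have "A^2 - (2 - A) * beta1 A = 2 * sqrt (1 - A) * beta1 A"
    unfolding beta1_def using s(1) by (simp add: algebra_simps power2_eq_square)
  finally show ?thesis using s beta_facts[OF A0 A1] by simp
qed

lemma isCont_EE_b1: "isCont (EE A) b1"
proof -
  have r: "isCont (R2 A) b1" by (rule isCont_R2_b1)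
  have "isCont (N1 A) b1" unfolding N1_def[abs_def] using r by (intro continuous_intros)
  moreover have "isCont (N2 A) b1" unfolding N2_def[abs_def] using r by (intro continuous_intros)
  ultimately show ?thesis unfolding EE_def[abs_def] using r N1_b1 N2_b1 beta_facts[OF A0 A1]
    by (intro continuous_intros) auto
qed

lemma isCont_EE: assumes "z \<in> UU A" "z \<noteq> 0" shows "isCont (EE A) z"
  using has_derivative_continuous[OF EE_deriv[OF A0 A1 assms]] .

lemma cont_EE_on: "continuous_on (UU A - {0}) (EE A)"
  by (intro continuous_at_imp_continuous_on ballI isCont_EE) auto

lemma seg_in_UU:
  assumes "z \<notin> cutset A" "0 < t" "t \<le> 1"
  shows "linepath b1 z t \<in> UU A - {0}"
proof -
  have b: "0 < beta1 A" using beta_facts[OF A0 A1] by auto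
  have z: "Im z \<noteq> 0 \<or> (0 < Re z \<and> Re z < beta1 A)" using assms(1) by (auto simp: cutset_def)
  have Im: "Im (linepath b1 z t) = t * Im z" and Re: "Re (linepath b1 z t) = (1 - t) * beta1 A + t * Re z"
    by (simp_all add: linepath_def)
  show ?thesis
  proof (cases "Im z = 0")
    case False
    then have "Im (linepath b1 z t) \<noteq> 0" using Im assms by simp
    then show ?thesis by (auto simp: UU_iff[OF A0 A1])
  next
    case True
    then have zr: "0 < Re z" "Re z < beta1 A" using z by auto
    have "(1 - t) * beta1 A + t * Re z < beta1 A"
    proof -
      have "t * Re z < t * beta1 A" using zr assms by simp
      then show ?thesis by (simp add: algebra_simps)
    qed
    moreover have "0 < (1 - t) * beta1 A + t * Re z"
      using zr assms b by (intro add_nonneg_pos) (auto intro: mult_nonneg_nonneg)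
    ultimately show ?thesis using Re by (auto simp: UU_iff[OF A0 A1])
  qed
qed

lemma Rfun_isCont_b1: "isCont (\<lambda>s. Rfun A s / s) b1"
proof -
  have c: "isCont (\<lambda>w. sqrt (cmod (w - b1)) * sqrt (cmod (w - of_real (beta2 A)))) b1"
    by (intro continuous_intros)
  have "((\<lambda>w. sqrt (cmod (w - b1)) * sqrt (cmod (w - of_real (beta2 A)))) \<longlongrightarrow> 0) (at b1)"
    using c unfolding isCont_def by simp
  then have "((\<lambda>w. norm (Rfun A w)) \<longlongrightarrow> 0) (at b1)"
    by (simp add: Rfun_def norm_mult)
  then have "(Rfun A \<longlongrightarrow> 0) (at b1)" by (rule tendsto_norm_zero_cancel)
  then have "((\<lambda>s. Rfun A s / s) \<longlongrightarrow> 0 / b1) (at b1)"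
    using beta_facts[OF A0 A1] by (intro tendsto_intros) auto
  then show ?thesis unfolding isCont_def by (simp add: Rfun_def)
qed

lemma Rfun_isCont: assumes "z \<in> UU A" "z \<noteq> 0" shows "isCont (\<lambda>s. Rfun A s / s) z"
proof -
  have "isCont (\<lambda>s. R2 A s / s) z"
    using holomorphic_on_imp_continuous_on[OF R2_holo[OF A0 A1]] open_UU[OF A0 A1] assms
    by (intro continuous_intros) (auto simp: continuous_on_eq_continuous_at)
  moreover have "eventually (\<lambda>s. Rfun A s / s = R2 A s / s) (nhds z)"
    using eventually_nhds_in_open[OF open_UU[OF A0 A1] assms(1)]
    by eventually_elim (simp add: Rfun_eq[OF A0 A1])
  ultimately show ?thesis using isCont_cong[of "\<lambda>s. Rfun A s / s" "\<lambda>s. R2 A s / s" z] by blast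
qed

lemma RePhi_off_cut: assumes "z \<notin> cutset A"
  shows "Re (phi A z) = EE A z - EE A b1"
proof -
  define f where "f = (\<lambda>s. Rfun A s / s)"
  define \<gamma> where "\<gamma> = linepath b1 z"
  have seg: "\<gamma> t \<in> UU A - {0}" if "0 < t" "t \<le> 1" for t
    unfolding \<gamma>_def using seg_in_UU[OF assms that] .
  have "continuous_on (closed_segment b1 z) f"
  proof (intro continuous_at_imp_continuous_on ballI)
    fix s assume "s \<in> closed_segment b1 z"
    then obtain t where t: "0 \<le> t" "t \<le> 1" "s = \<gamma> t"
      unfolding \<gamma>_def path_image_linepath[symmetric] path_image_def by auto
    show "isCont f s"
    proof (cases "t = 0")
      case True
      then have "s = b1" using t by (simp add: \<gamma>_def linepath_def)
      then show ?thesis unfolding f_def using Rfun_isCont_b1 by simp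
    next
      case False
      then have "s \<in> UU A - {0}" using seg[of t] t by auto
      then show ?thesis unfolding f_def using Rfun_isCont by auto
    qed
  qed
  then have "f contour_integrable_on \<gamma>" unfolding \<gamma>_def by (rule contour_integrable_continuous_linepath)
  then have "(f has_contour_integral (contour_integral \<gamma> f)) \<gamma>" by (rule has_contour_integral_integral)
  then have "((\<lambda>x. f (\<gamma> x) * (z - b1)) has_integral (contour_integral \<gamma> f)) {0..1}"
    unfolding \<gamma>_def has_contour_integral_linepath .
  from has_integral_linear[OF this bounded_linear_Re]
  have I1: "((\<lambda>x. Re (f (\<gamma> x) * (z - b1))) has_integral Re (contour_integral \<gamma> f)) {0..1}"
    by (simp add: o_def)
  define k where "k = (\<lambda>t. EE A (\<gamma> t))"
  have "((\<lambda>x. Re (f (\<gamma> x) * (z - b1)) / 2) has_integral (k 1 - k 0)) {0..1}"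
  proof (rule fundamental_theorem_of_calculus_interior)
    show "continuous_on {0..1} k"
    proof (intro continuous_at_imp_continuous_on ballI)
      fix t :: real assume t: "t \<in> {0..1}"
      have g: "isCont \<gamma> t" unfolding \<gamma>_def linepath_def by (intro continuous_intros)
      have "isCont (EE A) (\<gamma> t)"
      proof (cases "t = 0")
        case True
        then show ?thesis using isCont_EE_b1 by (simp add: \<gamma>_def linepath_def)
      next
        case False
        then show ?thesis using seg[of t] t isCont_EE by auto
      qed
      then show "isCont k t" unfolding k_def using continuous_at_compose[OF g] by (simp add: o_def)
    qed
  next
    fix t :: real assume t: "t \<in> {0<..<1}"
    then have s: "\<gamma> t \<in> UU A - {0}" using seg by auto
    have g: "(\<gamma> has_derivative (\<lambda>h. h *\<^sub>R (z - b1))) (at t)"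
      unfolding \<gamma>_def linepath_def
      by (auto intro!: derivative_eq_intros simp: algebra_simps)
    have "(k has_derivative ((\<lambda>h. Re (h * (R2 A (\<gamma> t) / (2 * \<gamma> t)))) \<circ> (\<lambda>h. h *\<^sub>R (z - b1)))) (at t)"
      unfolding k_def using diff_chain_at[OF g EE_deriv[OF A0 A1]] s by (auto simp: o_def)
    moreover have "((\<lambda>h. Re (h * (R2 A (\<gamma> t) / (2 * \<gamma> t)))) \<circ> (\<lambda>h. h *\<^sub>R (z - b1)))
        = (\<lambda>h. h *\<^sub>R (Re (f (\<gamma> t) * (z - b1)) / 2))"
    proof (rule ext)
      fix h :: real
      define W where "W = R2 A (\<gamma> t) / \<gamma> t * (z - b1)"
      have eqW: "W = f (\<gamma> t) * (z - b1)" using s by (simp add: W_def f_def Rfun_eq[OF A0 A1])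
      have "((\<lambda>h. Re (h * (R2 A (\<gamma> t) / (2 * \<gamma> t)))) \<circ> (\<lambda>h. h *\<^sub>R (z - b1))) h
           = Re (of_real h * (W / 2))" unfolding W_def by (simp add: scaleR_conv_of_real field_simps)
      also have "\<dots> = h * (Re W / 2)" by (simp only: Re_complex_of_real_mult_eq) simp
      also have "\<dots> = h *\<^sub>R (Re (f (\<gamma> t) * (z - b1)) / 2)" by (simp add: eqW)
      finally show "((\<lambda>h. Re (h * (R2 A (\<gamma> t) / (2 * \<gamma> t)))) \<circ> (\<lambda>h. h *\<^sub>R (z - b1))) h
         = h *\<^sub>R (Re (f (\<gamma> t) * (z - b1)) / 2)" .
    qed
    ultimately show "(k has_vector_derivative (Re (f (\<gamma> t) * (z - b1)) / 2)) (at t)"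
      unfolding has_vector_derivative_def by simp
  qed simp
  from has_integral_cmul[OF this, of 2]
  have h2: "((\<lambda>x. 2 *\<^sub>R (Re (f (\<gamma> x) * (z - b1)) / 2)) has_integral 2 *\<^sub>R (k 1 - k 0)) {0..1}" .
  have e: "(\<lambda>x. 2 *\<^sub>R (Re (f (\<gamma> x) * (z - b1)) / 2)) = (\<lambda>x. Re (f (\<gamma> x) * (z - b1)))"
    by (rule ext) simp
  have "((\<lambda>x. Re (f (\<gamma> x) * (z - b1))) has_integral (2 * (k 1 - k 0))) {0..1}"
    using h2 unfolding e by simp
  with I1 have "Re (contour_integral \<gamma> f) = 2 * (k 1 - k 0)" by (rule has_integral_unique)
  moreover have "k 1 = EE A z" "k 0 = EE A b1" by (simp_all add: k_def \<gamma>_def linepath_def)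
  moreover have "phi A z = contour_integral \<gamma> f / 2" by (simp add: phi_def \<gamma>_def f_def)
  ultimately show ?thesis by (metis Re_divide_numeral nonzero_mult_div_cancel_left zero_neq_numeral right_diff_distrib)
qed

end


lemma Im_deriv: "(f has_field_derivative f') (at z) \<Longrightarrow>
   ((\<lambda>w. Im (f w)) has_derivative (\<lambda>h. Im (h * f'))) (at z)"
proof -
  assume a: "(f has_field_derivative f') (at z)"
  have eq: "(\<lambda>h. Im (f' * h)) = (\<lambda>h. Im (h * f'))" by (simp add: mult.commute)
  show ?thesis using has_derivative_Im[OF has_field_derivative_imp_has_derivative[OF a]] unfolding eq .
qed

context
  fixes A :: real
  assumes A0: "0 < A" and A1: "A < 1"
begin

lemma RePhi_eq: assumes "z \<in> UU A" "z \<noteq> 0"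
  shows "RePhi A z = EE A z - EE A (b1 A)"
proof (cases "z \<in> cutset A")
  case False
  then show ?thesis using RePhi_off_cut[OF A0 A1 False] by (simp add: RePhi_def)
next
  case True
  have ev: "eventually (\<lambda>w. EE A w - EE A (b1 A) = Re (phi A w)) (at z within - cutset A)"
    unfolding eventually_at_filter
    by (intro always_eventually allI impI) (simp add: RePhi_off_cut[OF A0 A1])
  have "((\<lambda>w. EE A w - EE A (b1 A)) \<longlongrightarrow> EE A z - EE A (b1 A)) (at z within - cutset A)"
    using tendsto_within_subset[OF isCont_EE[OF A0 A1 assms, unfolded isCont_def] subset_UNIV]
    by (intro tendsto_intros)
  then have t: "((\<lambda>w. Re (phi A w)) \<longlongrightarrow> EE A z - EE A (b1 A)) (at z within - cutset A)"
    using Lim_transform_eventually[OF _ ev] by blast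
  have "z islimpt (- cutset A)"
    unfolding islimpt_approachable
  proof (intro allI impI)
    fix e :: real assume e: "0 < e"
    show "\<exists>x'\<in>- cutset A. x' \<noteq> z \<and> dist x' z < e"
      using e True by (intro bexI[of _ "z + \<i> * of_real (e / 2)"]) (auto simp: cutset_def dist_norm norm_mult)
  qed
  then have "\<not> trivial_limit (at z within - cutset A)" by (simp add: trivial_limit_within)
  from tendsto_Lim[OF this t] show ?thesis using True by (simp add: RePhi_def)
qed

lemma RePhi_harmonic:
  assumes "open S" "S \<subseteq> UU A - {0}"
  shows "harmonic_on S (RePhi A)"
proof -
  define G where "G = (\<lambda>z. R2 A z / (2 * z))"
  define V where "V = UU A - {0}"
  have oV: "open V" unfolding V_def using open_UU[OF A0 A1] by (simp add: open_delete)
  have hG: "G holomorphic_on V" unfolding G_def V_def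
    by (intro holomorphic_intros holomorphic_on_subset[OF R2_holo[OF A0 A1]]) auto
  have hG': "deriv G holomorphic_on V" using holomorphic_deriv[OF hG oV] .
  have cG': "continuous_on S (deriv G)"
    using holomorphic_on_imp_continuous_on[OF hG'] assms(2) continuous_on_subset V_def by blast
  have dG: "(G has_field_derivative deriv G z) (at z)" if "z \<in> S" for z
    using holomorphic_derivI[OF hG oV] that assms(2) V_def by blast
  define ux where "ux = (\<lambda>z. Re (G z))"
  define uy where "uy = (\<lambda>z. - Im (G z))"
  define uxx where "uxx = (\<lambda>z. Re (deriv G z))"
  define uxy where "uxy = (\<lambda>z. - Im (deriv G z))"
  define uyy where "uyy = (\<lambda>z. - Re (deriv G z))"
  have C: "continuous_on S uxx \<and> continuous_on S uxy \<and> continuous_on S uxy \<and> continuous_on S uyy"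
    unfolding uxx_def uxy_def uyy_def using cG' by (auto intro!: continuous_intros)
  have D: "(RePhi A has_derivative (\<lambda>h. Re h * ux z + Im h * uy z)) (at z) \<and>
                (ux has_derivative (\<lambda>h. Re h * uxx z + Im h * uxy z)) (at z) \<and>
                (uy has_derivative (\<lambda>h. Re h * uxy z + Im h * uyy z)) (at z) \<and>
                uxx z + uyy z = 0" if z: "z \<in> S" for z
    unfolding ux_def uy_def uxx_def uxy_def uyy_def
  proof (intro conjI)
    have zV: "z \<in> UU A" "z \<noteq> 0" using assms(2) z by auto
    have "(EE A has_derivative (\<lambda>h. Re (h * G z))) (at z)"
      unfolding G_def using EE_deriv[OF A0 A1 zV] .
    then have "((\<lambda>w. EE A w - EE A (b1 A)) has_derivative (\<lambda>h. Re (h * G z) - 0)) (at z)"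
      by (intro derivative_intros)
    then have "((\<lambda>w. EE A w - EE A (b1 A)) has_derivative (\<lambda>h. Re (h * G z))) (at z)" by simp
    then have "(RePhi A has_derivative (\<lambda>h. Re (h * G z))) (at z)"
    proof (rule has_derivative_transform_within_open[OF _ assms(1) z])
      fix w assume "w \<in> S"
      then have "w \<in> UU A" "w \<noteq> 0" using assms(2) by auto
      then show "EE A w - EE A (b1 A) = RePhi A w" using RePhi_eq by simp
    qed
    moreover have "(\<lambda>h. Re (h * G z)) = (\<lambda>h. Re h * Re (G z) + Im h * - Im (G z))" by auto
    ultimately show "(RePhi A has_derivative (\<lambda>h. Re h * Re (G z) + Im h * - Im (G z))) (at z)" by simp
    have "((\<lambda>w. Re (G w)) has_derivative (\<lambda>h. Re (h * deriv G z))) (at z)"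
      by (rule Re_deriv[OF dG[OF z]])
    moreover have "(\<lambda>h. Re (h * deriv G z)) = (\<lambda>h. Re h * Re (deriv G z) + Im h * - Im (deriv G z))" by auto
    ultimately show "((\<lambda>z. Re (G z)) has_derivative (\<lambda>h. Re h * Re (deriv G z) + Im h * - Im (deriv G z))) (at z)"
      by simp
    have "((\<lambda>w. - Im (G w)) has_derivative (\<lambda>h. - Im (h * deriv G z))) (at z)"
      by (intro derivative_intros Im_deriv[OF dG[OF z]])
    moreover have "(\<lambda>h. - Im (h * deriv G z)) = (\<lambda>h. Re h * - Im (deriv G z) + Im h * - Re (deriv G z))"
      by (auto simp: algebra_simps)
    ultimately show "((\<lambda>z. - Im (G z)) has_derivative (\<lambda>h. Re h * - Im (deriv G z) + Im h * - Re (deriv G z))) (at z)"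
      by simp
    show "Re (deriv G z) + - Re (deriv G z) = 0" by simp
  qed
  show ?thesis unfolding harmonic_on_def using assms(1) C D by blast
qed

end


context
  fixes A :: real
  assumes A0: "0 < A" and A1: "A < 1"
begin

lemma N1_holo: "N1 A holomorphic_on UU A"
  unfolding N1_def[abs_def] using R2_holo[OF A0 A1] by (intro holomorphic_intros)

lemma N2_holo: "N2 A holomorphic_on UU A"
  unfolding N2_def[abs_def] using R2_holo[OF A0 A1] by (intro holomorphic_intros)

lemma F_exists:
  "\<exists>F P. F holomorphic_on UU A \<and> P holomorphic_on UU A \<and>
      (\<forall>z\<in>UU A. P z \<noteq> 0 \<and> F z = z * P z) \<and>
      (\<forall>z\<in>UU A - {0}. cmod (F z) = exp (- (2 / A) * RePhi A z))"
proof -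
  obtain L where hL: "L holomorphic_on UU A" and eL: "\<forall>z\<in>UU A. N1 A z = exp (L z)"
    using simply_connected_UU[OF A0 A1] N1_holo N1_nz[OF A0 A1] open_UU[OF A0 A1]
    unfolding simply_connected_eq_holomorphic_log[OF open_UU[OF A0 A1]] by blast
  define c where "c = EE A (b1 A)"
  define P where "P = (\<lambda>z. exp (- R2 A z / of_real A + of_real ((2 - A) / A) * L z + of_real (2 / A * c)) / N2 A z)"
  have hP: "P holomorphic_on UU A" unfolding P_def using hL R2_holo[OF A0 A1] N2_holo N2_nz[OF A0 A1] A0
    by (intro holomorphic_intros) auto
  have nP: "P z \<noteq> 0" if "z \<in> UU A" for z using N2_nz[OF A0 A1 that] by (simp add: P_def)
  have nrm: "cmod (z * P z) = exp (- (2 / A) * RePhi A z)" if z: "z \<in> UU A" "z \<noteq> 0" for z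
  proof -
    have n1: "N1 A z \<noteq> 0" "N2 A z \<noteq> 0" using N1_nz[OF A0 A1 z(1)] N2_nz[OF A0 A1 z(1)] by auto
    have ReL: "Re (L z) = ln (cmod (N1 A z))" using eL z(1) by simp
    define X where "X = - Re (R2 A z) / A + (2 - A) / A * ln (cmod (N1 A z)) + 2 / A * c"
    have "Re (- R2 A z / of_real A + of_real ((2 - A) / A) * L z + of_real (2 / A * c)) = X"
      unfolding X_def ReL[symmetric] by simp
    then have "cmod (z * P z) = cmod z * exp X / cmod (N2 A z)"
      unfolding P_def by (simp add: norm_mult norm_divide norm_exp_eq_Re)
    also have "\<dots> = exp (X - ln (cmod (N2 A z)) + ln (cmod z))"
      using n1 z by (simp add: exp_add exp_diff)
    also have "X - ln (cmod (N2 A z)) + ln (cmod z) = - (2 / A) * (EE A z - c)"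
      unfolding X_def EE_def using A0 by (simp add: field_simps)
    also have "EE A z - c = RePhi A z" unfolding c_def using RePhi_eq[OF A0 A1 z] by simp
    finally show ?thesis .
  qed
  show ?thesis
    by (rule exI[of _ "\<lambda>z. z * P z"], rule exI[of _ P]) (use hP nP nrm in \<open>auto intro!: holomorphic_intros\<close>)
qed

end


lemma limpt_eventually_contra:
  fixes x :: "'a::metric_space"
  assumes "x islimpt K" "K \<subseteq> S" "eventually P (at x within S)" "\<And>y. y \<in> K \<Longrightarrow> \<not> P y"
  shows False
proof -
  from assms(3) obtain d where d: "d > 0" "\<And>y. y \<in> S \<Longrightarrow> y \<noteq> x \<Longrightarrow> dist y x < d \<Longrightarrow> P y"
    unfolding eventually_at by blast
  from assms(1) d(1) obtain y where "y \<in> K" "y \<noteq> x" "dist y x < d"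
    unfolding islimpt_approachable by blast
  then show False using d assms(2,4) by blast
qed

lemma MM_limsup:
  fixes f :: "complex \<Rightarrow> complex" and S :: "complex set"
  assumes holf: "f holomorphic_on S" and S: "open S" "connected S" "bounded S"
    and lim: "\<And>\<zeta> e. \<zeta> \<in> frontier S \<Longrightarrow> e > 0 \<Longrightarrow> eventually (\<lambda>z. norm (f z) < M + e) (at \<zeta> within S)"
    and z0: "z0 \<in> S"
  shows "norm (f z0) \<le> M"
proof (rule ccontr)
  assume "\<not> norm (f z0) \<le> M"
  then have m: "norm (f z0) > M" by simp
  define m where "m = norm (f z0)"
  define K where "K = S \<inter> (\<lambda>z. norm (f z)) -` {m..}"
  have cf: "continuous_on S f" using holf by (rule holomorphic_on_imp_continuous_on)
  then have cnf: "continuous_on S (\<lambda>z. norm (f z))" by (intro continuous_intros)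
  have ev: "eventually (\<lambda>z. norm (f z) < m) (at \<zeta> within S)" if "\<zeta> \<in> frontier S" for \<zeta>
    using lim[OF that, of "m - M"] m by (simp add: m_def)
  have KS: "K \<subseteq> S" by (auto simp: K_def)
  have ci: "closedin (top_of_set S) K"
    unfolding K_def by (rule continuous_closedin_preimage[OF cnf]) simp
  have "closed K"
    unfolding closed_limpt
  proof (intro allI impI)
    fix x assume x: "x islimpt K"
    show "x \<in> K"
    proof (cases "x \<in> S")
      case True
      then show ?thesis using ci x unfolding closedin_limpt by blast
    next
      case False
      have "x \<in> closure S" using islimpt_subset[OF x KS] by (simp add: closure_def)
      then have "x \<in> frontier S" using False S(1) by (simp add: frontier_def interior_open)
      from limpt_eventually_contra[OF x KS ev[OF this]] show ?thesis by (auto simp: K_def)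
    qed
  qed
  moreover have "bounded K" using S(3) KS bounded_subset by blast
  ultimately have cK: "compact K" by (simp add: compact_eq_bounded_closed)
  have "z0 \<in> K" using z0 by (simp add: K_def m_def)
  then obtain w where w: "w \<in> K" "\<And>y. y \<in> K \<Longrightarrow> norm (f y) \<le> norm (f w)"
    using continuous_attains_sup[OF cK _ continuous_on_subset[OF cnf KS]] by blast
  have wS: "w \<in> S" and wm: "norm (f w) \<ge> m" using w(1) by (auto simp: K_def)
  have "norm (f y) \<le> norm (f w)" if "y \<in> S" for y
  proof (cases "y \<in> K")
    case True then show ?thesis using w by blast
  next
    case False then have "norm (f y) < m" using that by (auto simp: K_def)
    then show ?thesis using wm by simp
  qed
  then have "f constant_on S"
    by (intro maximum_modulus_principle[OF holf S(1,2) S(1) order_refl wS]) auto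
  then obtain c where c: "\<And>z. z \<in> S \<Longrightarrow> f z = c" unfolding constant_on_def by blast
  have "S \<noteq> UNIV" using S(3) not_bounded_UNIV by blast
  then obtain \<zeta> where \<zeta>: "\<zeta> \<in> frontier S" using frontier_not_empty z0 by blast
  have "\<zeta> islimpt S"
  proof -
    have "\<zeta> \<in> closure S" "\<zeta> \<notin> S" using \<zeta> S(1) by (auto simp: frontier_def interior_open)
    then show ?thesis by (simp add: closure_def)
  qed
  from limpt_eventually_contra[OF this order_refl ev[OF \<zeta>]] show False
    using c wS wm by (metis c not_less)
qed


lemma RM0:
  fixes S :: "complex set"
  assumes "open S" "simply_connected S" "bounded S" "0 \<in> S"
  obtains \<phi> \<psi> where "\<phi> holomorphic_on S" "\<psi> holomorphic_on ball 0 1"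
    "\<And>z. z \<in> S \<Longrightarrow> \<phi> z \<in> ball 0 1 \<and> \<psi> (\<phi> z) = z"
    "\<And>u. u \<in> ball 0 1 \<Longrightarrow> \<psi> u \<in> S \<and> \<phi> (\<psi> u) = u" "\<phi> 0 = 0"
proof -
  have "S \<noteq> {}" "S \<noteq> UNIV" using assms not_bounded_UNIV by auto
  then obtain f g where fg: "f holomorphic_on S" "g holomorphic_on ball 0 1"
    "\<forall>z \<in> S. f z \<in> ball 0 1 \<and> g(f z) = z" "\<forall>z \<in> ball 0 1. g z \<in> S \<and> f(g z) = z"
    using Riemann_mapping_theorem[of S] assms by blast
  have a: "f 0 \<in> ball 0 1" using fg assms by blast
  obtain m mi where m: "m (f 0) = 0"
                "m holomorphic_on ball 0 1" "m ` ball 0 1 \<subseteq> ball 0 1"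
                "mi holomorphic_on ball 0 1" "mi ` ball 0 1 \<subseteq> ball 0 1"
                "\<And>z. z \<in> ball 0 1 \<Longrightarrow> m (mi z) = z"
                "\<And>z. z \<in> ball 0 1 \<Longrightarrow> mi (m z) = z"
    using ball_biholomorphism_exists[OF a] by metis
  show ?thesis
  proof (rule that[of "m \<circ> f" "g \<circ> mi"])
    show "(m \<circ> f) holomorphic_on S"
      using fg m by (intro holomorphic_on_compose_gen[where t="ball 0 1"]) auto
    show "(g \<circ> mi) holomorphic_on ball 0 1"
      using fg m by (intro holomorphic_on_compose_gen[where t="ball 0 1"]) auto
    show "(m \<circ> f) z \<in> ball 0 1 \<and> (g \<circ> mi) ((m \<circ> f) z) = z" if "z \<in> S" for z
    proof -
      have "f z \<in> ball 0 1" using fg that by blast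
      then have "m (f z) \<in> ball 0 1" using m(3) by blast
      then show ?thesis using fg m that \<open>f z \<in> ball 0 1\<close> by auto
    qed
    show "(g \<circ> mi) u \<in> S \<and> (m \<circ> f) ((g \<circ> mi) u) = u" if "u \<in> ball 0 1" for u
    proof -
      have "mi u \<in> ball 0 1" using m(5) that by blast
      then show ?thesis using fg m that by auto
    qed
    show "(m \<circ> f) 0 = 0" using m by simp
  qed
qed

lemma sublevel_compact:
  fixes f :: "complex \<Rightarrow> real" and S :: "complex set"
  assumes cf: "continuous_on S f" and S: "open S" "bounded S"
    and bd: "\<And>\<zeta>. \<zeta> \<in> frontier S \<Longrightarrow> eventually (\<lambda>z. c < f z) (at \<zeta> within S)"
  shows "compact {z\<in>S. f z \<le> c}"
proof -
  define K where "K = S \<inter> f -` {..c}"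
  have KS: "K \<subseteq> S" by (auto simp: K_def)
  have ci: "closedin (top_of_set S) K"
    unfolding K_def by (rule continuous_closedin_preimage[OF cf]) simp
  have "closed K"
    unfolding closed_limpt
  proof (intro allI impI)
    fix x assume x: "x islimpt K"
    show "x \<in> K"
    proof (cases "x \<in> S")
      case True
      then show ?thesis using ci x unfolding closedin_limpt by blast
    next
      case False
      have "x \<in> closure S" using islimpt_subset[OF x KS] by (simp add: closure_def)
      then have "x \<in> frontier S" using False S(1) by (simp add: frontier_def interior_open)
      from limpt_eventually_contra[OF x KS bd[OF this]] show ?thesis by (auto simp: K_def)
    qed
  qed
  moreover have "bounded K" using S(2) KS bounded_subset by blast
  ultimately have "compact K" by (simp add: compact_eq_bounded_closed)
  moreover have "K = {z\<in>S. f z \<le> c}" by (auto simp: K_def)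
  ultimately show ?thesis by simp
qed


lemma eventually_norm_gt:
  fixes \<zeta> :: complex
  assumes "r < norm \<zeta>"
  shows "eventually (\<lambda>u. r < norm u) (at \<zeta> within T)"
  using order_tendstoD(1)[OF tendsto_norm[OF tendsto_ident_at] assms] .

lemma level_curves:
  fixes S :: "complex set" and F P :: "complex \<Rightarrow> complex"
  assumes S: "open S" "bounded S" "simply_connected S" "0 \<in> S"
   and hF: "F holomorphic_on S" and hP: "P holomorphic_on S"
   and FP: "\<And>z. z \<in> S \<Longrightarrow> P z \<noteq> 0 \<and> F z = z * P z"
   and le1: "\<And>z. z \<in> S \<Longrightarrow> norm (F z) \<le> 1"
   and bd: "\<And>\<zeta> e. \<zeta> \<in> frontier S \<Longrightarrow> e > 0 \<Longrightarrow> eventually (\<lambda>z. 1 - e < norm (F z)) (at \<zeta> within S)"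
  obtains \<psi> where "\<psi> holomorphic_on (ball (0::complex) 1)" "inj_on \<psi> (ball 0 1)" "\<psi> ` ball 0 1 = S" "\<psi> 0 = 0"
     "\<And>u. u \<in> ball 0 1 \<Longrightarrow> norm (F (\<psi> u)) = norm (u::complex)"
proof -
  obtain \<phi> \<psi> where h\<phi>: "\<phi> holomorphic_on S" and h\<psi>: "\<psi> holomorphic_on ball 0 1"
    and inv1: "\<And>z. z \<in> S \<Longrightarrow> \<phi> z \<in> ball 0 1 \<and> \<psi> (\<phi> z) = z"
    and inv2: "\<And>u. u \<in> ball 0 1 \<Longrightarrow> \<psi> u \<in> S \<and> \<phi> (\<psi> u) = u" and \<phi>0: "\<phi> 0 = 0"
    using RM0[OF S(1,3,2,4)] by metis
  have \<psi>0: "\<psi> 0 = 0" using inv1[OF S(4)] \<phi>0 by simp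
  have c\<psi>: "continuous_on (ball 0 1) \<psi>" using h\<psi> by (rule holomorphic_on_imp_continuous_on)
  have c\<phi>: "continuous_on S \<phi>" using h\<phi> by (rule holomorphic_on_imp_continuous_on)
  have inj\<psi>: "inj_on \<psi> (ball 0 1)" by (metis inj_onI inv2)
  have img: "\<psi> ` ball 0 1 = S"
  proof
    show "\<psi> ` ball 0 1 \<subseteq> S" using inv2 by blast
    show "S \<subseteq> \<psi> ` ball 0 1" using inv1 by (metis image_eqI subsetI)
  qed
  have cS: "connected S" using S(3) simply_connected_imp_connected by blast
  have cnF: "continuous_on S (\<lambda>z. norm (F z))"
    using holomorphic_on_imp_continuous_on[OF hF] by (intro continuous_intros)
  have prp: "\<exists>r<1. \<forall>u\<in>ball 0 1. r < norm u \<longrightarrow> 1 - e < norm (F (\<psi> u))" if e: "e > 0" for e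
  proof -
    define K where "K = {z\<in>S. norm (F z) \<le> 1 - e}"
    have cK: "compact K" unfolding K_def
      by (rule sublevel_compact[OF cnF S(1,2)]) (use bd e in auto)
    show ?thesis
    proof (cases "K = {}")
      case True
      show ?thesis
      proof (intro exI[of _ 0] conjI ballI impI)
        fix u :: complex assume u: "u \<in> ball 0 1" "0 < norm u"
        have "\<psi> u \<in> S" using inv2 u by blast
        then show "1 - e < norm (F (\<psi> u))" using True unfolding K_def by force
      qed simp
    next
      case False
      have "compact (\<phi> ` K)" using cK c\<phi> by (intro compact_continuous_image continuous_on_subset[OF c\<phi>]) (auto simp: K_def)
      moreover have "\<phi> ` K \<noteq> {}" using False by simp
      ultimately obtain v where v: "v \<in> \<phi> ` K" "\<And>y. y \<in> \<phi> ` K \<Longrightarrow> norm y \<le> norm v"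
        using continuous_attains_sup[of "\<phi> ` K" norm] by (auto intro: continuous_intros)
      have vb: "norm v < 1" using v(1) inv1 by (auto simp: K_def)
      show ?thesis
      proof (intro exI[of _ "norm v"] conjI ballI impI vb)
        fix u :: complex assume u: "u \<in> ball 0 1" "norm v < norm u"
        show "1 - e < norm (F (\<psi> u))"
        proof (rule ccontr)
          assume "\<not> 1 - e < norm (F (\<psi> u))"
          then have "\<psi> u \<in> K" using inv2[OF u(1)] by (auto simp: K_def)
          then have "\<phi> (\<psi> u) \<in> \<phi> ` K" by blast
          then have "norm u \<le> norm v" using v(2) inv2[OF u(1)] by auto
          then show False using u by simp
        qed
      qed
    qed
  qed
  have bdB: "eventually (\<lambda>u. 1 - e < norm (F (\<psi> u))) (at \<zeta> within ball 0 1)"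
    if ze: "\<zeta> \<in> sphere 0 1" "e > 0" for \<zeta> e
  proof -
    obtain r where r: "r < 1" "\<And>u. u \<in> ball 0 1 \<Longrightarrow> r < norm u \<Longrightarrow> 1 - e < norm (F (\<psi> u))"
      using prp[OF ze(2)] by blast
    have "eventually (\<lambda>u. r < norm u) (at \<zeta> within ball 0 1)"
      using ze r by (intro eventually_norm_gt) simp
    moreover have "eventually (\<lambda>u. u \<in> ball 0 1) (at \<zeta> within ball 0 1)"
      by (simp add: eventually_at_filter)
    ultimately show ?thesis by eventually_elim (use r in auto)
  qed
  define q where "q = (\<lambda>u. if u = 0 then deriv \<psi> 0 else (\<psi> u - \<psi> 0) / (u - 0))"
  have hq: "q holomorphic_on ball 0 1" unfolding q_def by (rule pole_lemma[OF h\<psi>]) simp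
  have \<psi>q: "\<psi> u = u * q u" if "u \<in> ball 0 1" for u using \<psi>0 by (simp add: q_def)
  have nq: "q u \<noteq> 0" if u: "u \<in> ball 0 1" for u
  proof (cases "u = 0")
    case True
    then show ?thesis unfolding q_def using holomorphic_injective_imp_regular[OF h\<psi> open_ball inj\<psi>] by simp
  next
    case False
    have "\<psi> u \<noteq> 0" using inv2[OF u] \<phi>0 False by metis
    then show ?thesis using False \<psi>0 by (simp add: q_def)
  qed
  define Q where "Q = (\<lambda>u. q u * P (\<psi> u))"
  have hQ: "Q holomorphic_on ball 0 1" unfolding Q_def
    using hq holomorphic_on_compose_gen[OF h\<psi> hP] inv2 by (auto intro!: holomorphic_intros simp: o_def image_subset_iff)
  have nQ: "Q u \<noteq> 0" if "u \<in> ball 0 1" for u using nq[OF that] FP inv2[OF that] by (simp add: Q_def)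
  have BQ: "F (\<psi> u) = u * Q u" if "u \<in> ball 0 1" for u
    using FP[of "\<psi> u"] inv2[OF that] \<psi>q[OF that] by (simp add: Q_def)
  have fb: "frontier (ball (0::complex) 1) = sphere 0 1" by simp
  have Qle: "norm (Q u) \<le> 1" if "u \<in> ball 0 1" for u
  proof (rule MM_limsup[OF hQ open_ball connected_ball bounded_ball _ that])
    fix \<zeta> :: complex and e :: real assume \<zeta>: "\<zeta> \<in> frontier (ball 0 1)" and e: "e > 0"
    have "eventually (\<lambda>u. 1 / (1 + e) < norm u) (at \<zeta> within ball 0 1)"
      using \<zeta> e by (intro eventually_norm_gt) (simp add: field_simps)
    moreover have "eventually (\<lambda>u. u \<in> ball 0 1) (at \<zeta> within ball 0 1)"
      by (simp add: eventually_at_filter)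
    ultimately show "eventually (\<lambda>u. norm (Q u) < 1 + e) (at \<zeta> within ball 0 1)"
    proof eventually_elim
      case (elim u)
      have u0: "0 < norm u" using elim(1) e by (smt (verit) divide_pos_pos)
      have "norm u * norm (Q u) \<le> 1" using le1[of "\<psi> u"] inv2[OF elim(2)] BQ[OF elim(2)] by (simp add: norm_mult)
      then have "norm (Q u) \<le> 1 / norm u" using u0 by (simp add: field_simps)
      also have "\<dots> < 1 + e" using elim(1) u0 e by (simp add: field_simps)
      finally show ?case .
    qed
  qed
  have Qge: "norm (1 / Q u) \<le> 1" if "u \<in> ball 0 1" for u
  proof (rule MM_limsup[OF _ open_ball connected_ball bounded_ball _ that])
    show "(\<lambda>u. 1 / Q u) holomorphic_on ball 0 1" using hQ nQ by (intro holomorphic_intros) auto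
  next
    fix \<zeta> :: complex and e :: real assume \<zeta>: "\<zeta> \<in> frontier (ball 0 1)" and e: "e > 0"
    have e': "1 - 1 / (1 + e) > 0" using e by (simp add: field_simps)
    have "eventually (\<lambda>u. 1 - (1 - 1 / (1 + e)) < norm (F (\<psi> u))) (at \<zeta> within ball 0 1)"
      using bdB[OF _ e'] \<zeta> by simp
    moreover have "eventually (\<lambda>u. u \<in> ball 0 1) (at \<zeta> within ball 0 1)"
      by (simp add: eventually_at_filter)
    ultimately show "eventually (\<lambda>u. norm (1 / Q u) < 1 + e) (at \<zeta> within ball 0 1)"
    proof eventually_elim
      case (elim u)
      have B: "1 / (1 + e) < norm u * norm (Q u)" using elim BQ[OF elim(2)] by (simp add: norm_mult)
      have Qp: "0 < norm (Q u)" using nQ[OF elim(2)] by simp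
      have u1: "norm u < 1" using elim(2) by simp
      have "1 / (1 + e) < norm (Q u)"
        using B u1 Qp by (smt (verit) mult_left_le_one_le norm_ge_zero)
      then have "1 / norm (Q u) < 1 + e" using Qp e by (simp add: field_simps)
      then show ?case by (simp add: norm_divide)
    qed
  qed
  have normF: "norm (F (\<psi> u)) = norm u" if "u \<in> ball 0 1" for u
  proof -
    have "norm (Q u) = 1"
      using Qle[OF that] Qge[OF that] nQ[OF that] by (simp add: norm_divide field_simps)
    then show ?thesis using BQ[OF that] by (simp add: norm_mult)
  qed
  show ?thesis using that[OF h\<psi> inj\<psi> img \<psi>0 normF] .
qed


lemma curve_from_psi:
  fixes \<psi> :: "complex \<Rightarrow> complex"
  assumes h\<psi>: "\<psi> holomorphic_on ball 0 1" and inj: "inj_on \<psi> (ball 0 1)" and \<psi>0: "\<psi> 0 = 0"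
    and \<rho>: "0 < \<rho>" "\<rho> < 1"
  shows "\<exists>h. simple_path h \<and> pathfinish h = pathstart h \<and> path_image h = \<psi> ` sphere 0 \<rho>
           \<and> 0 \<in> inside (path_image h)"
proof -
  have c\<psi>: "continuous_on (ball 0 1) \<psi>" using h\<psi> by (rule holomorphic_on_imp_continuous_on)
  have sub: "sphere 0 \<rho> \<subseteq> ball (0::complex) 1" "cball 0 \<rho> \<subseteq> ball (0::complex) 1" "ball 0 \<rho> \<subseteq> ball (0::complex) 1"
    using \<rho> by auto
  define h where "h = \<psi> \<circ> circlepath 0 \<rho>"
  have pic: "path_image (circlepath 0 \<rho>) = sphere 0 \<rho>" using \<rho> by simp
  have sp: "simple_path h" unfolding h_def
    by (rule simple_path_continuous_image) (use \<rho> sub pic c\<psi> inj in \<open>auto simp: simple_path_circlepath intro: continuous_on_subset inj_on_subset\<close>)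
  have cl: "pathfinish h = pathstart h" unfolding h_def by (simp add: pathfinish_compose pathstart_compose)
  have pih: "path_image h = \<psi> ` sphere 0 \<rho>" unfolding h_def path_image_compose pic ..
  define T where "T = \<psi> ` sphere 0 \<rho>"
  define W where "W = \<psi> ` ball 0 \<rho>"
  define Kc where "Kc = \<psi> ` cball 0 \<rho>"
  have oW: "open W" unfolding W_def
    by (rule open_mapping_thm3) (use h\<psi> inj sub in \<open>auto intro: holomorphic_on_subset inj_on_subset\<close>)
  have cKc: "compact Kc" unfolding Kc_def
    by (rule compact_continuous_image) (use c\<psi> sub in \<open>auto intro: continuous_on_subset\<close>)
  have WK: "W \<subseteq> Kc" unfolding W_def Kc_def by auto
  have nT: "0 \<notin> T"
  proof
    assume "0 \<in> T"
    then obtain u where u: "u \<in> sphere 0 \<rho>" "\<psi> u = 0" by (auto simp: T_def)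
    then have "u = 0" using inj \<psi>0 sub by (metis inj_onD centre_in_ball subsetD zero_less_one)
    then show False using u \<rho> by simp
  qed
  define C where "C = connected_component_set (- T) 0"
  have cC: "connected C" unfolding C_def by simp
  have CT: "C \<subseteq> - T" unfolding C_def by (rule connected_component_subset)
  have z0C: "0 \<in> C" unfolding C_def using nT by simp
  have "C \<subseteq> W \<union> - Kc"
  proof
    fix x assume "x \<in> C"
    then have xT: "x \<notin> T" using CT by auto
    show "x \<in> W \<union> - Kc"
    proof (cases "x \<in> Kc")
      case True
      then obtain u where u: "u \<in> cball 0 \<rho>" "x = \<psi> u" by (auto simp: Kc_def)
      then have "u \<notin> sphere 0 \<rho>" using xT by (auto simp: T_def)
      then have "u \<in> ball 0 \<rho>" using u by auto
      then show ?thesis using u by (auto simp: W_def)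
    qed simp
  qed
  moreover have "W \<inter> - Kc \<inter> C = {}" using WK by auto
  moreover have "open (- Kc)" using cKc by (simp add: compact_imp_closed open_Compl)
  ultimately have "W \<inter> C = {} \<or> - Kc \<inter> C = {}" using connectedD[OF cC oW] by blast
  moreover have "0 \<in> W" using \<psi>0 \<rho> by (auto simp: W_def)
  ultimately have "C \<subseteq> Kc" using z0C by auto
  then have "bounded C" using cKc compact_imp_bounded bounded_subset by blast
  then have "0 \<in> inside T" unfolding inside_def C_def using nT by simp
  then show ?thesis using sp cl pih by (intro exI[of _ h]) (simp add: T_def)
qed


lemma ray_unbounded: "\<not> bounded ((\<lambda>t. complex_of_real t) ` {a..})"
proof
  assume "bounded ((\<lambda>t. complex_of_real t) ` {a..})"
  then obtain B where B: "\<And>x. x \<in> (\<lambda>t. complex_of_real t) ` {a..} \<Longrightarrow> norm x \<le> B"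
    unfolding bounded_iff by blast
  have "complex_of_real (max a (\<bar>B\<bar> + 1)) \<in> (\<lambda>t. complex_of_real t) ` {a..}" by auto
  from B[OF this] show False by (simp add: abs_real_def split: if_splits)
qed

context
  fixes A :: real and g :: "real \<Rightarrow> complex"
  assumes A0: "0 < A" and A1: "A < 1" and G: "is_Gamma0 A g"
begin

lemma G_facts:
  shows "simple_path g" "pathfinish g = pathstart g" "b1 A \<in> path_image g"
    "\<And>z. z \<in> path_image g \<Longrightarrow> z \<noteq> b1 A \<Longrightarrow> z \<in> UU A \<and> z \<noteq> 0 \<and> RePhi A z = 0"
    "0 \<notin> path_image g"
proof -
  show sp: "simple_path g" "pathfinish g = pathstart g" using G by (auto simp: is_Gamma0_def)
  show "b1 A \<in> path_image g" using G pathstart_in_path_image[of g] by (auto simp: is_Gamma0_def)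
  show "z \<in> UU A \<and> z \<noteq> 0 \<and> RePhi A z = 0" if "z \<in> path_image g" "z \<noteq> b1 A" for z
    using G that by (auto simp: is_Gamma0_def UU_iff[OF A0 A1])
  have "b1 A \<noteq> 0" using beta_facts[OF A0 A1] by simp
  then show "0 \<notin> path_image g" using G by (auto simp: is_Gamma0_def)
qed

abbreviation "\<Omega> \<equiv> inside (path_image g)"

lemma J: "\<Omega> \<noteq> {}" "open \<Omega>" "connected \<Omega>" "bounded \<Omega>" "frontier \<Omega> = path_image g"
  using Jordan_inside_outside[OF G_facts(1,2)] by auto

lemma Omega_UU: "\<Omega> \<subseteq> UU A"
proof
  fix z assume z: "z \<in> \<Omega>"
  show "z \<in> UU A"
  proof (rule ccontr)
    assume "z \<notin> UU A"
    then have zr: "Im z = 0" "beta1 A \<le> Re z" by (auto simp: UU_iff[OF A0 A1])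
    have zz: "z = complex_of_real (Re z)" using zr by (simp add: complex_eq_iff)
    show False
    proof (cases "Re z = beta1 A")
      case True
      then have "z = b1 A" using zz by simp
      then show False using z G_facts(3) inside_no_overlap by blast
    next
      case False
      define Ray where "Ray = (\<lambda>t. complex_of_real t) ` {Re z..}"
      have cR: "connected Ray" unfolding Ray_def by (intro connected_continuous_image) (auto intro: continuous_intros)
      have zR: "z \<in> Ray" unfolding Ray_def using zz by (metis atLeast_iff image_eqI order_refl)
      have sR: "Ray \<subseteq> - path_image g"
      proof
        fix w assume "w \<in> Ray"
        then obtain t where t: "t \<ge> Re z" "w = complex_of_real t" by (auto simp: Ray_def)
        then have "w \<noteq> b1 A" using False zr by auto
        moreover have "w \<notin> UU A" using t zr by (auto simp: UU_iff[OF A0 A1])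
        ultimately show "w \<in> - path_image g" using G_facts(4) by blast
      qed
      have "Ray \<subseteq> connected_component_set (- path_image g) z"
        by (rule connected_component_maximal[OF zR cR sR])
      then have "\<not> bounded (connected_component_set (- path_image g) z)"
        using ray_unbounded bounded_subset unfolding Ray_def by blast
      then show False using z by (simp add: inside_def)
    qed
  qed
qed

lemma zero_notin_frontier: "0 \<notin> frontier \<Omega>" using J(5) G_facts(5) by simp

lemma boundary_limit:
  assumes "\<zeta> \<in> path_image g"
  shows "((RePhi A) \<longlongrightarrow> 0) (at \<zeta> within \<Omega>)"
proof -
  have z0: "\<zeta> \<noteq> 0" using assms G_facts(5) by auto
  have c: "isCont (EE A) \<zeta>"
  proof (cases "\<zeta> = b1 A")
    case True then show ?thesis using isCont_EE_b1[OF A0 A1] by simp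
  next
    case False then show ?thesis using G_facts(4)[OF assms] isCont_EE[OF A0 A1] by auto
  qed
  have v: "EE A \<zeta> - EE A (b1 A) = 0"
  proof (cases "\<zeta> = b1 A")
    case False
    then have "\<zeta> \<in> UU A" "\<zeta> \<noteq> 0" "RePhi A \<zeta> = 0" using G_facts(4)[OF assms] by auto
    then show ?thesis using RePhi_eq[OF A0 A1] by simp
  qed simp
  have "((\<lambda>w. EE A w - EE A (b1 A)) \<longlongrightarrow> EE A \<zeta> - EE A (b1 A)) (at \<zeta> within \<Omega>)"
    by (intro tendsto_intros tendsto_within_subset[OF c[unfolded isCont_def] subset_UNIV])
  then have tl: "((\<lambda>w. EE A w - EE A (b1 A)) \<longlongrightarrow> 0) (at \<zeta> within \<Omega>)" unfolding v .
  have ev: "eventually (\<lambda>w. EE A w - EE A (b1 A) = RePhi A w) (at \<zeta> within \<Omega>)"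
  proof -
    have "eventually (\<lambda>w. w \<in> - {0}) (nhds \<zeta>)" using z0 by (intro eventually_nhds_in_open) auto
    then have "eventually (\<lambda>w. w \<noteq> 0) (at \<zeta> within \<Omega>)"
      by (simp add: eventually_at_filter eventually_mono)
    moreover have "eventually (\<lambda>w. w \<in> \<Omega>) (at \<zeta> within \<Omega>)" by (simp add: eventually_at_filter)
    ultimately show ?thesis
    proof eventually_elim
      case (elim w)
      then have "w \<in> UU A" using Omega_UU by blast
      then show ?case using RePhi_eq[OF A0 A1, of w] elim by simp
    qed
  qed
  show ?thesis using Lim_transform_eventually[OF tl ev] by simp
qed

end


context
  fixes A :: real
  assumes A0: "0 < A" and A1: "A < 1"
begin

lemma bound_near_0: "\<exists>M. \<forall>\<^sub>F z in at 0. \<bar>(2 / A) * RePhi A z + ln (cmod z)\<bar> \<le> M"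
proof -
  define H where "H = (\<lambda>z. (2 / A) * (Re (R2 A z) / 2 - (2 - A) / 2 * ln (cmod (N1 A z))
      + A / 2 * ln (cmod (N2 A z)) - EE A (b1 A)))"
  have u0: "0 \<in> UU A" by (rule zero_UU[OF A0 A1])
  have cR: "isCont (R2 A) 0"
    using holomorphic_on_imp_continuous_on[OF R2_holo[OF A0 A1]] open_UU[OF A0 A1] u0
    by (simp add: continuous_on_eq_continuous_at)
  have "isCont (N1 A) 0" unfolding N1_def[abs_def] using cR by (intro continuous_intros)
  moreover have "isCont (N2 A) 0" unfolding N2_def[abs_def] using cR by (intro continuous_intros)
  ultimately have cH: "isCont H 0" unfolding H_def using cR N1_nz[OF A0 A1 u0] N2_nz[OF A0 A1 u0]
    by (intro continuous_intros) auto
  have "eventually (\<lambda>z. dist (H z) (H 0) < 1) (at 0)"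
    using cH unfolding isCont_def by (rule tendstoD) simp
  moreover have "eventually (\<lambda>z. z \<in> UU A) (at 0)"
    using eventually_nhds_in_open[OF open_UU[OF A0 A1] u0] by (simp add: eventually_at_filter eventually_mono)
  moreover have "eventually (\<lambda>z. z \<noteq> 0) (at (0::complex))" by (simp add: eventually_at_filter)
  ultimately have "eventually (\<lambda>z. \<bar>(2 / A) * RePhi A z + ln (cmod z)\<bar> \<le> \<bar>H 0\<bar> + 1) (at 0)"
  proof eventually_elim
    case (elim z)
    have "(2 / A) * RePhi A z + ln (cmod z) = H z"
      unfolding RePhi_eq[OF A0 A1 elim(2,3)] H_def EE_def using A0 by (simp add: field_simps)
    then show ?case using elim(1) by (simp add: dist_real_def)
  qed
  then show ?thesis by blast
qed

end

context
  fixes A :: real and g :: "real \<Rightarrow> complex"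
  assumes A0: "0 < A" and A1: "A < 1" and G: "is_Gamma0 A g"
begin

lemma main_conj:
  shows "harmonic_on (inside (path_image g) - {0}) (RePhi A)
     \<and> (\<forall>\<zeta>\<in>path_image g. ((RePhi A) \<longlongrightarrow> 0) (at \<zeta> within inside (path_image g)))
     \<and> (\<exists>M. \<forall>\<^sub>F z in at 0. \<bar>(2 / A) * RePhi A z + ln (cmod z)\<bar> \<le> M)
     \<and> (\<forall>z\<in>inside (path_image g) - {0}. RePhi A z > 0)
     \<and> (\<forall>r>0. \<exists>h. simple_path h \<and> pathfinish h = pathstart h
            \<and> path_image h = {z \<in> inside (path_image g) - {0}. RePhi A z = r / 2}
            \<and> 0 \<in> inside (path_image h))"
proof -
  note J = J[OF A0 A1 G]
  note OU = Omega_UU[OF A0 A1 G]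
  define \<Omega> where "\<Omega> = inside (path_image g)"
  have OmU: "\<Omega> \<subseteq> UU A" using OU by (simp add: \<Omega>_def)
  have oO: "open \<Omega>" "connected \<Omega>" "bounded \<Omega>" "\<Omega> \<noteq> {}" "frontier \<Omega> = path_image g"
    using J by (auto simp: \<Omega>_def)
  have bl: "((RePhi A) \<longlongrightarrow> 0) (at \<zeta> within \<Omega>)" if "\<zeta> \<in> path_image g" for \<zeta>
    using boundary_limit[OF A0 A1 G that] by (simp add: \<Omega>_def)
  have harm: "harmonic_on (\<Omega> - {0}) (RePhi A)"
    using RePhi_harmonic[OF A0 A1, of "\<Omega> - {0}"] oO OmU by (auto simp: open_delete)
  obtain F P where hF: "F holomorphic_on UU A" and hP: "P holomorphic_on UU A"
    and FP: "\<And>z. z \<in> UU A \<Longrightarrow> P z \<noteq> 0 \<and> F z = z * P z"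
    and nF: "\<And>z. z \<in> UU A - {0} \<Longrightarrow> cmod (F z) = exp (- (2 / A) * RePhi A z)"
    using F_exists[OF A0 A1] by blast
  have hFO: "F holomorphic_on \<Omega>" using hF OmU holomorphic_on_subset by blast
  have hPO: "P holomorphic_on \<Omega>" using hP OmU holomorphic_on_subset by blast
  have F0: "F 0 = 0" using FP[OF zero_UU[OF A0 A1]] by simp
  have Fnz: "F z \<noteq> 0" if "z \<in> UU A" "z \<noteq> 0" for z using FP[OF that(1)] that(2) by simp
  have nFlim: "((\<lambda>z. norm (F z)) \<longlongrightarrow> 1) (at \<zeta> within \<Omega>)" if z: "\<zeta> \<in> frontier \<Omega>" for \<zeta>
  proof -
    have zg: "\<zeta> \<in> path_image g" using z oO by simp
    have z0: "\<zeta> \<noteq> 0" using zg G_facts(5)[OF A0 A1 G] by auto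
    have "((\<lambda>z. exp (- (2 / A) * RePhi A z)) \<longlongrightarrow> exp (- (2 / A) * 0)) (at \<zeta> within \<Omega>)"
      by (intro tendsto_intros bl[OF zg])
    then have t: "((\<lambda>z. exp (- (2 / A) * RePhi A z)) \<longlongrightarrow> 1) (at \<zeta> within \<Omega>)" by simp
    have "eventually (\<lambda>w. w \<in> - {0}) (nhds \<zeta>)" using z0 by (intro eventually_nhds_in_open) auto
    then have "eventually (\<lambda>w. w \<noteq> 0) (at \<zeta> within \<Omega>)"
      by (simp add: eventually_at_filter eventually_mono)
    moreover have "eventually (\<lambda>w. w \<in> \<Omega>) (at \<zeta> within \<Omega>)" by (simp add: eventually_at_filter)
    ultimately have ev: "eventually (\<lambda>w. exp (- (2 / A) * RePhi A w) = norm (F w)) (at \<zeta> within \<Omega>)"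
    proof eventually_elim
      case (elim w)
      then have "w \<in> UU A - {0}" using OmU by blast
      then show ?case using nF by simp
    qed
    show ?thesis using Lim_transform_eventually[OF t ev] .
  qed
  have le1: "norm (F z) \<le> 1" if "z \<in> \<Omega>" for z
  proof (rule MM_limsup[OF hFO oO(1,2,3) _ that])
    fix \<zeta> :: complex and e :: real assume "\<zeta> \<in> frontier \<Omega>" "e > 0"
    then show "eventually (\<lambda>z. norm (F z) < 1 + e) (at \<zeta> within \<Omega>)"
      using order_tendstoD(2)[OF nFlim] by simp
  qed
  have bdl: "eventually (\<lambda>z. 1 - e < norm (F z)) (at \<zeta> within \<Omega>)"
    if "\<zeta> \<in> frontier \<Omega>" "e > 0" for \<zeta> e
    using order_tendstoD(1)[OF nFlim[OF that(1)]] that(2) by simp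
  have zO: "0 \<in> \<Omega>"
  proof (rule ccontr)
    assume n0: "0 \<notin> \<Omega>"
    have Fn: "F z \<noteq> 0" if "z \<in> \<Omega>" for z using Fnz[of z] that OmU n0 by auto
    have ge1: "norm (1 / F z) \<le> 1" if "z \<in> \<Omega>" for z
    proof (rule MM_limsup[OF _ oO(1,2,3) _ that])
      show "(\<lambda>z. 1 / F z) holomorphic_on \<Omega>" using hFO Fn by (intro holomorphic_intros) auto
    next
      fix \<zeta> :: complex and e :: real assume z: "\<zeta> \<in> frontier \<Omega>" and e: "e > 0"
      have "((\<lambda>z. 1 / norm (F z)) \<longlongrightarrow> 1 / 1) (at \<zeta> within \<Omega>)"
        by (intro tendsto_intros nFlim[OF z]) simp
      then show "eventually (\<lambda>z. norm (1 / F z) < 1 + e) (at \<zeta> within \<Omega>)"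
        using order_tendstoD(2)[of _ 1 _ "1 + e"] e by (simp add: norm_divide)
    qed
    obtain w where w: "w \<in> \<Omega>" using oO(4) by blast
    have n1: "norm (F z) = 1" if "z \<in> \<Omega>" for z
      using le1[OF that] ge1[OF that] Fn[OF that] by (simp add: norm_divide field_simps)
    have "F constant_on \<Omega>"
      by (intro maximum_modulus_principle[OF hFO oO(1,2) oO(1) order_refl w]) (simp add: n1 w)
    then obtain c where c: "\<And>z. z \<in> \<Omega> \<Longrightarrow> F z = c" unfolding constant_on_def by blast
    have "F 0 = (\<lambda>_. c) 0"
      by (rule analytic_continuation_open[OF oO(1) open_UU[OF A0 A1] oO(4) connected_UU[OF A0 A1] OmU hF
            _ c zero_UU[OF A0 A1]]) simp
    then have "c = 0" using F0 by simp
    then show False using c[OF w] Fn[OF w] by simp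
  qed
  have lt1: "norm (F z) < 1" if z: "z \<in> \<Omega>" for z
  proof (rule ccontr)
    assume "\<not> norm (F z) < 1"
    then have "norm (F z) = 1" using le1[OF z] by simp
    then have "F constant_on \<Omega>" using le1
      by (intro maximum_modulus_principle[OF hFO oO(1,2) oO(1) order_refl z]) auto
    then obtain c where c: "\<And>z. z \<in> \<Omega> \<Longrightarrow> F z = c" unfolding constant_on_def by blast
    then show False using c[OF z] c[OF zO] F0 \<open>norm (F z) = 1\<close> by simp
  qed
  have pos: "RePhi A z > 0" if "z \<in> \<Omega> - {0}" for z
  proof -
    have "exp (- (2 / A) * RePhi A z) < 1" using nF[of z] lt1[of z] that OmU by auto
    then have "- (2 / A) * RePhi A z < 0" by simp
    then have "0 < 2 * RePhi A z / A" by simp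
    then show ?thesis using A0 by (simp add: zero_less_divide_iff)
  qed
  have scO: "simply_connected \<Omega>" unfolding \<Omega>_def
    by (rule simply_connected_inside_simple_path[OF G_facts(1)[OF A0 A1 G]])
  obtain \<psi> where h\<psi>: "\<psi> holomorphic_on ball 0 1" and inj: "inj_on \<psi> (ball 0 1)" and img: "\<psi> ` ball 0 1 = \<Omega>"
    and \<psi>0: "\<psi> 0 = 0" and n\<psi>: "\<And>u. u \<in> ball 0 1 \<Longrightarrow> norm (F (\<psi> u)) = norm u"
    using level_curves[OF oO(1) oO(3) scO zO hFO hPO _ le1 bdl] FP OmU by blast
  have lev: "\<exists>h. simple_path h \<and> pathfinish h = pathstart h
            \<and> path_image h = {z \<in> \<Omega> - {0}. RePhi A z = r / 2} \<and> 0 \<in> inside (path_image h)"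
    if r: "r > 0" for r
  proof -
    define \<rho> where "\<rho> = exp (- r / A)"
    have \<rho>: "0 < \<rho>" "\<rho> < 1" using r A0 by (auto simp: \<rho>_def)
    have eqs: "\<psi> ` sphere 0 \<rho> = {z \<in> \<Omega> - {0}. RePhi A z = r / 2}"
    proof
      show "\<psi> ` sphere 0 \<rho> \<subseteq> {z \<in> \<Omega> - {0}. RePhi A z = r / 2}"
      proof
        fix z assume "z \<in> \<psi> ` sphere 0 \<rho>"
        then obtain u where u: "norm u = \<rho>" "z = \<psi> u" by auto
        have ub: "u \<in> ball 0 1" using u \<rho> by simp
        have zO: "z \<in> \<Omega>" using img ub u by blast
        have nz: "norm (F z) = \<rho>" using n\<psi>[OF ub] u by simp
        then have z0: "z \<noteq> 0" using F0 \<rho> by auto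
        have "exp (- (2 / A) * RePhi A z) = exp (- r / A)" using nF[of z] zO z0 OmU nz by (auto simp: \<rho>_def)
        then have "- (2 / A) * RePhi A z = - r / A" by simp
        then have "RePhi A z = r / 2" using A0 by (simp add: field_simps)
        then show "z \<in> {z \<in> \<Omega> - {0}. RePhi A z = r / 2}" using zO z0 by simp
      qed
    next
      show "{z \<in> \<Omega> - {0}. RePhi A z = r / 2} \<subseteq> \<psi> ` sphere 0 \<rho>"
      proof
        fix z assume z: "z \<in> {z \<in> \<Omega> - {0}. RePhi A z = r / 2}"
        then have "norm (F z) = exp (- (2 / A) * (r / 2))" using nF[of z] OmU by auto
        also have "\<dots> = \<rho>" using A0 by (simp add: \<rho>_def)
        finally have nz: "norm (F z) = \<rho>" .
        obtain u where u: "u \<in> ball 0 1" "z = \<psi> u" using z img by blast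
        then have "norm u = \<rho>" using n\<psi>[OF u(1)] nz by simp
        then show "z \<in> \<psi> ` sphere 0 \<rho>" using u by auto
      qed
    qed
    show ?thesis using curve_from_psi[OF h\<psi> inj \<psi>0 \<rho>] unfolding eqs .
  qed
  show ?thesis
    using harm bl bound_near_0[OF A0 A1] pos lev by (simp add: \<Omega>_def)
qed

end

theorem mainTheorem2:
  fixes A :: real and g :: "real \<Rightarrow> complex"
  assumes "0 < A" "A < 1"
    and "is_Gamma0 A g"
  shows "harmonic_on (inside (path_image g) - {0}) (RePhi A)
     \<and> (\<forall>\<zeta>\<in>path_image g. ((RePhi A) \<longlongrightarrow> 0) (at \<zeta> within inside (path_image g)))
     \<and> (\<exists>M. \<forall>\<^sub>F z in at 0. \<bar>(2 / A) * RePhi A z + ln (cmod z)\<bar> \<le> M)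
     \<and> (\<forall>z\<in>inside (path_image g) - {0}. RePhi A z > 0)
     \<and> (\<forall>r>0. \<exists>h. simple_path h \<and> pathfinish h = pathstart h
            \<and> path_image h = {z \<in> inside (path_image g) - {0}. RePhi A z = r / 2}
            \<and> 0 \<in> inside (path_image h))"
  by (rule main_conj[OF assms])

end
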